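(* Let $\varepsilon\in(0,1)$, $\alpha\in(0,1/5)$, $d$ with $\alpha d\ge1$, and let $G=(V,E)$ be a graph with no isolated vertices, $V=W\cup B$ a partition, $n=|V|$, such that: $G$ is an $(n,d,\alpha)$-expander; $G[W]$ has maximum degree $d_{\max}$ and minimum degree at least $2(\varepsilon+\alpha)d$; with $\delta=\varepsilon d/(d_{\max}-2\varepsilon d)$ we have $\frac{8(1+\delta)(d_{\max}+1)}{\delta^2\exp(\frac{\varepsilon}{40\alpha}\log(1+\delta))}\le1$ and $\frac{8}{d_{\max}-4\varepsilon d}\le 1$; and (B1) $|B|\le\alpha n$, (B2) no edge has both endpoints in $B$, (B3) $\deg v\le d_{\max}+1$ for all $v\in B$, (B4) $|N(v)\cap B|\le1$ for all $v\in V$. Then $G[W]$ is a $(|W|,d,2\alpha)$-expander.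
   Context: $\|M\|$ is the spectral norm, $J$ the all-ones matrix of the appropriate size, $A_H$ the adjacency matrix of $H$. A graph $H$ is an $(m,d,\alpha)$-expander if it has $m$ vertices and $\|A_H-\frac dm J\|\le\alpha d$. $G[W]$ is the induced subgraph on $W$; $N(v)$ is the neighborhood of $v$ in $G$. *)

theory Defs
  imports Complex_Main
begin

definition simple_graph :: "'a set \<Rightarrow> ('a \<Rightarrow> 'a \<Rightarrow> bool) \<Rightarrow> bool" where
  "simple_graph V E \<longleftrightarrow> finite V \<and> (\<forall>u v. E u v \<longrightarrow> u \<in> V \<and> v \<in> V)
     \<and> (\<forall>u v. E u v \<longrightarrow> E v u) \<and> (\<forall>v. \<not> E v v)"

definition induced :: "('a \<Rightarrow> 'a \<Rightarrow> bool) \<Rightarrow> 'a set \<Rightarrow> 'a \<Rightarrow> 'a \<Rightarrow> bool" where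
  "induced E W = (\<lambda>u v. u \<in> W \<and> v \<in> W \<and> E u v)"

definition nbhd :: "'a set \<Rightarrow> ('a \<Rightarrow> 'a \<Rightarrow> bool) \<Rightarrow> 'a \<Rightarrow> 'a set" where
  "nbhd V E v = {u \<in> V. E v u}"

definition degree :: "'a set \<Rightarrow> ('a \<Rightarrow> 'a \<Rightarrow> bool) \<Rightarrow> 'a \<Rightarrow> nat" where
  "degree V E v = card (nbhd V E v)"

definition adj :: "('a \<Rightarrow> 'a \<Rightarrow> bool) \<Rightarrow> 'a \<Rightarrow> 'a \<Rightarrow> real" where
  "adj E u v = (if E u v then 1 else 0)"

definition spec_norm :: "'a set \<Rightarrow> ('a \<Rightarrow> 'a \<Rightarrow> real) \<Rightarrow> real" where
  "spec_norm S M = Sup {sqrt (\<Sum>i\<in>S. (\<Sum>j\<in>S. M i j * x j)^2) | x.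
      (\<Sum>j\<in>S. (x j)^2) \<le> 1}"

definition expander :: "'a set \<Rightarrow> ('a \<Rightarrow> 'a \<Rightarrow> bool) \<Rightarrow> nat \<Rightarrow> real \<Rightarrow> real \<Rightarrow> bool" where
  "expander S E m d \<alpha> \<longleftrightarrow> card S = m \<and>
     spec_norm S (\<lambda>u v. adj E u v - d / real m) \<le> \<alpha> * d"

end

theory Submission
  imports Defs "HOL-Analysis.L2_Norm"
begin

lemma spec_bdd:
  assumes "finite S"
  shows "bdd_above {sqrt (\<Sum>i\<in>S. (\<Sum>j\<in>S. M i j * x j)^2) | x. (\<Sum>j\<in>S. (x j)^2) \<le> 1}"
proof -
  have "sqrt (\<Sum>i\<in>S. (\<Sum>j\<in>S. M i j * x j)^2) \<le> sqrt (\<Sum>i\<in>S. (\<Sum>j\<in>S. \<bar>M i j\<bar>)^2)"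
    if hx: "(\<Sum>j\<in>S. (x j)^2) \<le> 1" for x
  proof -
    have xb: "\<bar>x j\<bar> \<le> 1" if "j \<in> S" for j
    proof -
      have "(x j)^2 \<le> (\<Sum>j\<in>S. (x j)^2)"
        by (rule member_le_sum) (use that assms in auto)
      then have "(x j)^2 \<le> 1^2" using hx by simp
      then show ?thesis using abs_le_square_iff by (metis abs_one)
    qed
    have "\<bar>\<Sum>j\<in>S. M i j * x j\<bar> \<le> (\<Sum>j\<in>S. \<bar>M i j\<bar>)" for i
    proof -
      have "\<bar>\<Sum>j\<in>S. M i j * x j\<bar> \<le> (\<Sum>j\<in>S. \<bar>M i j * x j\<bar>)" by (rule sum_abs)
      also have "\<dots> \<le> (\<Sum>j\<in>S. \<bar>M i j\<bar>)"
        by (rule sum_mono) (use xb in \<open>auto simp: abs_mult intro: mult_left_le\<close>)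
      finally show ?thesis .
    qed
    then have "(\<Sum>j\<in>S. M i j * x j)^2 \<le> (\<Sum>j\<in>S. \<bar>M i j\<bar>)^2" for i
      by (metis abs_ge_zero power2_abs power_mono)
    then show ?thesis by (intro real_sqrt_le_mono sum_mono) auto
  qed
  then show ?thesis unfolding bdd_above_def by blast
qed

lemma spec_upper:
  assumes "finite S" "(\<Sum>j\<in>S. (x j)^2) \<le> 1"
  shows "sqrt (\<Sum>i\<in>S. (\<Sum>j\<in>S. M i j * x j)^2) \<le> spec_norm S M"
  unfolding spec_norm_def
  by (rule cSup_upper) (use assms spec_bdd[OF assms(1)] in auto)

lemma spec_least:
  assumes "\<And>x. (\<Sum>j\<in>S. (x j)^2) \<le> 1 \<Longrightarrow> sqrt (\<Sum>i\<in>S. (\<Sum>j\<in>S. M i j * x j)^2) \<le> c"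
  shows "spec_norm S M \<le> c"
  unfolding spec_norm_def
proof (rule cSup_least)
  show "{sqrt (\<Sum>i\<in>S. (\<Sum>j\<in>S. M i j * x j)\<^sup>2) |x. (\<Sum>j\<in>S. (x j)\<^sup>2) \<le> 1} \<noteq> {}"
  proof -
    have "sqrt (\<Sum>i\<in>S. (\<Sum>j\<in>S. M i j * (\<lambda>_. 0::real) j)\<^sup>2) \<in> {sqrt (\<Sum>i\<in>S. (\<Sum>j\<in>S. M i j * x j)\<^sup>2) |x. (\<Sum>j\<in>S. (x j)\<^sup>2) \<le> 1}"
      by (rule CollectI, rule exI[of _ "\<lambda>_. 0"]) simp
    then show ?thesis by blast
  qed
qed (use assms in auto)

theorem lemma2p4:
  fixes V W B :: "'a set" and E :: "'a \<Rightarrow> 'a \<Rightarrow> bool"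
    and \<epsilon> \<alpha> d :: real and dmax n :: nat
  assumes graph: "simple_graph V E"
    and no_isolated: "\<forall>v\<in>V. \<exists>u\<in>V. E v u"
    and eps: "0 < \<epsilon>" "\<epsilon> < 1"
    and alpha: "0 < \<alpha>" "\<alpha> < 1/5"
    and alpha_d: "\<alpha> * d \<ge> 1"
    and partition: "V = W \<union> B" "W \<inter> B = {}"
    and n_def: "n = card V"
    and expG: "expander V E n d \<alpha>"
    and dmax_bound: "\<forall>v\<in>W. degree W (induced E W) v \<le> dmax"
    and dmax_attained: "\<exists>v\<in>W. degree W (induced E W) v = dmax"
    and mindeg: "\<forall>v\<in>W. real (degree W (induced E W) v) \<ge> 2 * (\<epsilon> + \<alpha>) * d"
    and cond1: "let \<delta> = \<epsilon> * d / (real dmax - 2 * \<epsilon> * d) in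
       8 * (1 + \<delta>) * (real dmax + 1) / (\<delta>^2 * exp (\<epsilon> / (40 * \<alpha>) * ln (1 + \<delta>))) \<le> 1"
    and cond2: "8 / (real dmax - 4 * \<epsilon> * d) \<le> 1"
    and B1: "real (card B) \<le> \<alpha> * real n"
    and B2: "\<forall>u\<in>B. \<forall>v\<in>B. \<not> E u v"
    and B3: "\<forall>v\<in>B. real (degree V E v) \<le> real dmax + 1"
    and B4: "\<forall>v\<in>V. card (nbhd V E v \<inter> B) \<le> 1"
  shows "expander W (induced E W) (card W) d (2 * \<alpha>)"
proof -
  have finV: "finite V" using graph by (simp add: simple_graph_def)
  have finW: "finite W" and finB: "finite B" using finV partition by auto
  have WV: "W \<subseteq> V" using partition by auto
  have dpos: "d > 0" proof (rule ccontr)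
    assume "\<not> d > 0"
    then have "\<alpha> * d \<le> 0" using alpha by (simp add: mult_nonneg_nonpos)
    then show False using alpha_d by simp
  qed
  have cardV: "real n = real (card W) + real (card B)"
    using card_Un_disjoint[OF finW finB partition(2)] partition(1) n_def by simp
  define m where "m = card W"
  define M where "M = (\<lambda>u v. adj E u v - d / real n)"
  have normG: "spec_norm V M \<le> \<alpha> * d" using expG by (simp add: expander_def M_def)
  have main: "sqrt (\<Sum>i\<in>W. (\<Sum>j\<in>W. (adj (induced E W) i j - d / real m) * x j)^2) \<le> 2 * \<alpha> * d"
    if hx: "(\<Sum>j\<in>W. (x j)^2) \<le> 1" for x
  proof (cases "W = {}")
    case True
    then show ?thesis using alpha dpos by simp
  next
    case False
    then have mpos: "m > 0" using finW m_def by (simp add: card_gt_0_iff)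
    define x' where "x' = (\<lambda>j. if j \<in> W then x j else 0)"
    have "(\<Sum>j\<in>V. (x' j)^2) = (\<Sum>j\<in>W. (x' j)^2)"
      by (rule sum.mono_neutral_right) (use finV WV x'_def in auto)
    also have "\<dots> = (\<Sum>j\<in>W. (x j)^2)" by (simp add: x'_def)
    finally have hx': "(\<Sum>j\<in>V. (x' j)^2) \<le> 1" using hx by simp
    define y where "y = (\<lambda>i. \<Sum>j\<in>V. M i j * x' j)"
    have yW: "y i = (\<Sum>j\<in>W. M i j * x j)" for i
    proof -
      have "y i = (\<Sum>j\<in>W. M i j * x' j)" unfolding y_def
        by (rule sum.mono_neutral_right) (use finV WV x'_def in auto)
      then show ?thesis by (simp add: x'_def)
    qed
    have "L2_set y V \<le> \<alpha> * d"
      using spec_upper[OF finV hx', of M] normG by (simp add: L2_set_def y_def)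
    moreover have "L2_set y W \<le> L2_set y V"
      unfolding L2_set_def
      by (rule real_sqrt_le_mono, rule sum_mono2) (use finV WV in auto)
    ultimately have ynorm: "L2_set y W \<le> \<alpha> * d" by simp
    define s where "s = (\<Sum>j\<in>W. x j)"
    define c where "c = d / real m - d / real n"
    have zeq: "(\<Sum>j\<in>W. (adj (induced E W) i j - d / real m) * x j) = y i + (- c * s)"
      if "i \<in> W" for i
    proof -
      have "(\<Sum>j\<in>W. (adj (induced E W) i j - d / real m) * x j)
          = (\<Sum>j\<in>W. M i j * x j + (- c) * x j)"
        by (rule sum.cong) (use that in \<open>auto simp: adj_def induced_def M_def c_def algebra_simps\<close>)
      also have "\<dots> = y i + (- c * s)"
        by (simp add: sum.distrib yW s_def sum_distrib_left sum_negf sum_subtractf)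
      finally show ?thesis .
    qed
    have "sqrt (\<Sum>i\<in>W. (\<Sum>j\<in>W. (adj (induced E W) i j - d / real m) * x j)^2)
        = L2_set (\<lambda>i. y i + (- c * s)) W"
      unfolding L2_set_def by (rule arg_cong[where f=sqrt], rule sum.cong) (auto simp: zeq)
    also have "\<dots> \<le> L2_set y W + L2_set (\<lambda>_. - c * s) W" by (rule L2_set_triangle_ineq)
    also have "L2_set (\<lambda>_. - c * s) W = sqrt (real m) * \<bar>c * s\<bar>"
      by (simp add: L2_set_constant m_def)
    finally have tri: "sqrt (\<Sum>i\<in>W. (\<Sum>j\<in>W. (adj (induced E W) i j - d / real m) * x j)^2)
        \<le> L2_set y W + sqrt (real m) * \<bar>c * s\<bar>" .
    have "\<bar>s\<bar> \<le> sqrt (real m)"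
    proof -
      have "\<bar>s\<bar> \<le> (\<Sum>j\<in>W. \<bar>x j\<bar> * \<bar>1\<bar>)" unfolding s_def by (simp add: sum_abs)
      also have "\<dots> \<le> L2_set x W * L2_set (\<lambda>_. 1) W" by (rule L2_set_mult_ineq)
      also have "\<dots> \<le> 1 * sqrt (real m)"
      proof (rule mult_mono)
        show "L2_set x W \<le> 1" using hx by (simp add: L2_set_def)
      qed (auto simp: L2_set_constant m_def)
      finally show ?thesis by simp
    qed
    have cnn: "c \<ge> 0"
    proof -
      have "real m \<le> real n" using cardV m_def by simp
      then have "d / real n \<le> d / real m"
        using mpos dpos by (intro divide_left_mono) auto
      then show ?thesis unfolding c_def by simp
    qed
    have cm: "c * real m \<le> \<alpha> * d"
    proof -
      have npos: "real n > 0" using cardV mpos m_def by simp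
      have "c * real m = d * real (card B) / real n"
      proof -
        have "c * real m = d - d * real m / real n"
          unfolding c_def using mpos by (simp add: field_simps)
        also have "\<dots> = d * (real n - real m) / real n"
          using npos by (simp add: field_simps)
        also have "real n - real m = real (card B)" using cardV m_def by simp
        finally show ?thesis .
      qed
      also have "\<dots> \<le> d * (\<alpha> * real n) / real n"
        using B1 dpos npos by (intro divide_right_mono mult_left_mono) auto
      also have "\<dots> = \<alpha> * d" using npos by simp
      finally show ?thesis .
    qed
    have "sqrt (real m) * \<bar>c * s\<bar> \<le> sqrt (real m) * (c * sqrt (real m))"
      using \<open>\<bar>s\<bar> \<le> sqrt (real m)\<close> cnn by (auto simp: abs_mult intro!: mult_left_mono)
    also have "\<dots> = c * real m" by simp
    finally have "sqrt (real m) * \<bar>c * s\<bar> \<le> c * real m" .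
    then have "sqrt (real m) * \<bar>c * s\<bar> \<le> \<alpha> * d" using cm by linarith
    then show ?thesis using ynorm tri by linarith
  qed
  show ?thesis unfolding expander_def
  proof (intro conjI refl spec_least)
    fix x :: "'a \<Rightarrow> real"
    assume "(\<Sum>j\<in>W. (x j)\<^sup>2) \<le> 1"
    from main[OF this] show "sqrt (\<Sum>i\<in>W. (\<Sum>j\<in>W. (adj (induced E W) i j - d / real (card W)) * x j)\<^sup>2) \<le> 2 * \<alpha> * d"
      by (simp add: m_def)
  qed
qed

end
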